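(* Let $t\in[n]$ and let $S\subseteq N$ be $t$-switchable. Then the ideals $\tilde{\mathcal{I}}^{\langle t\rangle}_S$ and $P^{\langle t\rangle}_S$ of $R$ are prime.
   Context: Fix positive integers $n, r_1,\dots,r_n$, let $N=[r_1]\times\cdots\times[r_n]$, and let $R$ be the polynomial ring over a field in the variables $x_a$, $a\in N$. For $a,b\in N$ and $i\in[n]$, ${\rm s}(i,a,b)\in N$ has $i$-th component $b_i$ and other components equal to those of $a$. Let $d(a,b)=\#\{j: a_j\neq b_j\}$ and $f_{i,a,b}=x_ax_b-x_{{\rm s}(i,a,b)}x_{{\rm s}(i,b,a)}$. A subset $S\subseteq N$ is $t$-switchable if for all $a,b\in S$ with $d(a,b)=2$ and all $i\in[t]$, ${\rm s}(i,a,b)\in S$. Elements $a,b\in S$ are connected in $S$ if there are $a_0=a,\dots,a_k=b$ in $S$ with $d(a_{j-1},a_j)\le 1$ for all $j$. Set $\tilde{\mathcal{I}}^{\langle t\rangle}_S=(f_{i,a,b}: i\in[t],\ a,b \text{ connected in } S)$, $\mathrm{Var}^{\langle t\rangle}_S=(x_a: a\notin S)$, $P^{\langle t\rangle}_S=\mathrm{Var}^{\langle t\rangle}_S+\tilde{\mathcal{I}}^{\langle t\rangle}_S$. *)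

theory Defs
  imports "HOL-Algebra.Ideal" "HOL-Library.Poly_Mapping"
begin

text \<open>Points of N = [r_1] x ... x [r_n] are functions a :: nat => nat with
  a i in {1..r i} for i in {1..n} and a i = 0 otherwise.\<close>
definition gridN :: "nat \<Rightarrow> (nat \<Rightarrow> nat) \<Rightarrow> (nat \<Rightarrow> nat) set" where
  "gridN n r = {a. (\<forall>i\<in>{1..n}. a i \<in> {1..r i}) \<and> (\<forall>i. i \<notin> {1..n} \<longrightarrow> a i = 0)}"

type_synonym 'k mpoly = "((nat \<Rightarrow> nat) \<Rightarrow>\<^sub>0 nat) \<Rightarrow>\<^sub>0 'k"

definition polyN :: "nat \<Rightarrow> (nat \<Rightarrow> nat) \<Rightarrow> ('k::field) mpoly set" where
  "polyN n r = {p. \<forall>m\<in>Poly_Mapping.keys p. Poly_Mapping.keys m \<subseteq> gridN n r}"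

definition ringR :: "nat \<Rightarrow> (nat \<Rightarrow> nat) \<Rightarrow> ('k::field) mpoly ring" where
  "ringR n r = \<lparr>carrier = polyN n r, monoid.mult = (*), one = 1, zero = 0, add = (+)\<rparr>"

definition var :: "(nat \<Rightarrow> nat) \<Rightarrow> ('k::field) mpoly" where
  "var a = Poly_Mapping.single (Poly_Mapping.single a 1) 1"

definition sw :: "nat \<Rightarrow> (nat \<Rightarrow> nat) \<Rightarrow> (nat \<Rightarrow> nat) \<Rightarrow> (nat \<Rightarrow> nat)" where
  "sw i a b = a(i := b i)"

definition hdist :: "(nat \<Rightarrow> nat) \<Rightarrow> (nat \<Rightarrow> nat) \<Rightarrow> nat" where
  "hdist a b = card {j. a j \<noteq> b j}"

definition fbin :: "nat \<Rightarrow> (nat \<Rightarrow> nat) \<Rightarrow> (nat \<Rightarrow> nat) \<Rightarrow> ('k::field) mpoly" where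
  "fbin i a b = var a * var b - var (sw i a b) * var (sw i b a)"

definition switchable :: "nat \<Rightarrow> (nat \<Rightarrow> nat) set \<Rightarrow> bool" where
  "switchable t S \<longleftrightarrow> (\<forall>a\<in>S. \<forall>b\<in>S. hdist a b = 2 \<longrightarrow> (\<forall>i\<in>{1..t}. sw i a b \<in> S))"

definition connected_in :: "(nat \<Rightarrow> nat) set \<Rightarrow> (nat \<Rightarrow> nat) \<Rightarrow> (nat \<Rightarrow> nat) \<Rightarrow> bool" where
  "connected_in S a b \<longleftrightarrow> a \<in> S \<and> b \<in> S \<and>
     (a, b) \<in> {(x, y). x \<in> S \<and> y \<in> S \<and> hdist x y \<le> 1}\<^sup>*"

definition Itilde :: "nat \<Rightarrow> (nat \<Rightarrow> nat) \<Rightarrow> nat \<Rightarrow> (nat \<Rightarrow> nat) set \<Rightarrow> ('k::field) mpoly set" where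
  "Itilde n r t S = genideal (ringR n r)
     {fbin i a b | i a b. i \<in> {1..t} \<and> connected_in S a b}"

definition VarS :: "nat \<Rightarrow> (nat \<Rightarrow> nat) \<Rightarrow> (nat \<Rightarrow> nat) set \<Rightarrow> ('k::field) mpoly set" where
  "VarS n r S = genideal (ringR n r) {var a | a. a \<in> gridN n r \<and> a \<notin> S}"

definition PS :: "nat \<Rightarrow> (nat \<Rightarrow> nat) \<Rightarrow> nat \<Rightarrow> (nat \<Rightarrow> nat) set \<Rightarrow> ('k::field) mpoly set" where
  "PS n r t S = set_add (ringR n r) (VarS n r S) (Itilde n r t S)"

end

theory Submission
  imports Defs "HOL-Library.List_Lexorder"
begin
lemma keys_add_nat: "Poly_Mapping.keys (m1 + m2 :: 'a \<Rightarrow>\<^sub>0 nat) = Poly_Mapping.keys m1 \<union> Poly_Mapping.keys m2"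
  by (auto simp: in_keys_iff lookup_add)

lemma polyN_add: assumes "p \<in> polyN n r" "q \<in> polyN n r" shows "p + q \<in> polyN n r"
proof -
  have "Poly_Mapping.keys (p + q) \<subseteq> Poly_Mapping.keys p \<union> Poly_Mapping.keys q" by (rule keys_add)
  then show ?thesis using assms unfolding polyN_def by (auto simp only: mem_Collect_eq Un_iff subset_iff)
qed

lemma polyN_uminus: "p \<in> polyN n r \<Longrightarrow> - p \<in> polyN n r"
  unfolding polyN_def by (simp add: keys_minus)

lemma polyN_zero: "0 \<in> polyN n r" unfolding polyN_def by simp
lemma polyN_one: "1 \<in> polyN n r" unfolding polyN_def by simp

lemma polyN_mult: assumes "p \<in> polyN n r" "q \<in> polyN n r" shows "p * q \<in> polyN n r"
  unfolding polyN_def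
proof (intro CollectI ballI)
  have p: "\<forall>m\<in>Poly_Mapping.keys p. Poly_Mapping.keys m \<subseteq> gridN n r"
    and q: "\<forall>m\<in>Poly_Mapping.keys q. Poly_Mapping.keys m \<subseteq> gridN n r" using assms by (auto simp: polyN_def)
  fix m assume m: "m \<in> Poly_Mapping.keys (p*q)"
  have "m \<in> {a + b | a b. a \<in> Poly_Mapping.keys p \<and> b \<in> Poly_Mapping.keys q}"
    using m keys_mult[of p q] by (rule subsetD[rotated])
  then obtain a b where "a \<in> Poly_Mapping.keys p" "b \<in> Poly_Mapping.keys q" "m = a + b"
    by (auto simp only: mem_Collect_eq)
  then show "Poly_Mapping.keys m \<subseteq> gridN n r" using p q by (simp add: keys_add_nat)
qed

lemma polyN_diff: "p \<in> polyN n r \<Longrightarrow> q \<in> polyN n r \<Longrightarrow> p - q \<in> polyN n r"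
  unfolding diff_conv_add_uminus by (intro polyN_add polyN_uminus)

lemma cring_R: "cring (ringR n r :: ('k::field) mpoly ring)"
proof (rule cringI)
  show "abelian_group (ringR n r :: 'k mpoly ring)"
  proof (rule abelian_groupI)
    fix x assume "x \<in> carrier (ringR n r :: 'k mpoly ring)"
    then show "\<exists>y\<in>carrier (ringR n r). y \<oplus>\<^bsub>ringR n r\<^esub> x = \<zero>\<^bsub>ringR n r\<^esub>"
      by (intro bexI[of _ "- x"]) (simp_all add: ringR_def polyN_uminus)
  qed (simp_all add: ringR_def polyN_add polyN_zero add.assoc add.commute)
  show "comm_monoid (ringR n r :: 'k mpoly ring)"
    by (rule comm_monoidI) (simp_all add: ringR_def polyN_mult polyN_one mult.assoc mult.commute)
qed (simp add: ringR_def distrib_right)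

context fixes n :: nat and r :: "nat \<Rightarrow> nat" begin

lemma R_simps: "carrier (ringR n r :: ('k::field) mpoly ring) = polyN n r"
  "x \<oplus>\<^bsub>ringR n r\<^esub> y = x + y" "x \<otimes>\<^bsub>ringR n r\<^esub> y = x * y"
  "\<zero>\<^bsub>ringR n r\<^esub> = 0" "\<one>\<^bsub>ringR n r\<^esub> = 1"
  by (simp_all add: ringR_def)

lemma R_ainv: "x \<in> polyN n r \<Longrightarrow> \<ominus>\<^bsub>(ringR n r :: ('k::field) mpoly ring)\<^esub> x = - x"
proof -
  assume x: "x \<in> polyN n r"
  interpret cring "ringR n r :: 'k mpoly ring" by (rule cring_R)
  show ?thesis using x by (intro minus_equality) (simp_all add: R_simps polyN_uminus)
qed

lemma ideal_add: "ideal I (ringR n r :: ('k::field) mpoly ring) \<Longrightarrow> x \<in> I \<Longrightarrow> y \<in> I \<Longrightarrow> x + y \<in> I"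
  using additive_subgroup.a_closed[OF ideal.axioms(1)] by (fastforce simp: R_simps)

lemma ideal_carr: "ideal I (ringR n r :: ('k::field) mpoly ring) \<Longrightarrow> x \<in> I \<Longrightarrow> x \<in> polyN n r"
  using ideal.Icarr by (fastforce simp: R_simps)

lemma ideal_uminus: "ideal I (ringR n r :: ('k::field) mpoly ring) \<Longrightarrow> x \<in> I \<Longrightarrow> - x \<in> I"
  using additive_subgroup.a_inv_closed[OF ideal.axioms(1)] R_ainv ideal_carr by metis

lemma ideal_diff: "ideal I (ringR n r :: ('k::field) mpoly ring) \<Longrightarrow> x \<in> I \<Longrightarrow> y \<in> I \<Longrightarrow> x - y \<in> I"
  unfolding diff_conv_add_uminus by (intro ideal_add ideal_uminus)

lemma ideal_lmult: "ideal I (ringR n r :: ('k::field) mpoly ring) \<Longrightarrow> x \<in> polyN n r \<Longrightarrow> y \<in> I \<Longrightarrow> x * y \<in> I"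
  using ideal.I_l_closed by (fastforce simp: R_simps)

lemma ideal_zero: "ideal I (ringR n r :: ('k::field) mpoly ring) \<Longrightarrow> 0 \<in> I"
  using additive_subgroup.zero_closed[OF ideal.axioms(1)] by (fastforce simp: R_simps)

end

definition Phi :: "(('a \<Rightarrow>\<^sub>0 nat) \<Rightarrow> ('b \<Rightarrow>\<^sub>0 nat)) \<Rightarrow> (('a \<Rightarrow>\<^sub>0 nat) \<Rightarrow> 'k::comm_ring_1)
   \<Rightarrow> (('a \<Rightarrow>\<^sub>0 nat) \<Rightarrow>\<^sub>0 'k) \<Rightarrow> (('b \<Rightarrow>\<^sub>0 nat) \<Rightarrow>\<^sub>0 'k)" where
  "Phi \<mu> \<chi> p = (\<Sum>m\<in>Poly_Mapping.keys p. Poly_Mapping.single (\<mu> m) (\<chi> m * Poly_Mapping.lookup p m))"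

lemma Phi_superset: "finite K \<Longrightarrow> Poly_Mapping.keys p \<subseteq> K \<Longrightarrow>
   Phi \<mu> \<chi> p = (\<Sum>m\<in>K. Poly_Mapping.single (\<mu> m) (\<chi> m * Poly_Mapping.lookup p m))"
  unfolding Phi_def by (rule sum.mono_neutral_left) (auto simp: in_keys_iff)

lemma Phi_add: "Phi \<mu> \<chi> (p + q) = Phi \<mu> \<chi> p + Phi \<mu> \<chi> q"
proof -
  let ?K = "Poly_Mapping.keys p \<union> Poly_Mapping.keys q"
  have "Phi \<mu> \<chi> (p + q) = (\<Sum>m\<in>?K. Poly_Mapping.single (\<mu> m) (\<chi> m * Poly_Mapping.lookup (p+q) m))"
    using keys_add[of p q] by (intro Phi_superset) auto
  also have "\<dots> = (\<Sum>m\<in>?K. Poly_Mapping.single (\<mu> m) (\<chi> m * Poly_Mapping.lookup p m)) + (\<Sum>m\<in>?K. Poly_Mapping.single (\<mu> m) (\<chi> m * Poly_Mapping.lookup q m))"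
    by (simp add: lookup_add distrib_left single_add sum.distrib)
  also have "\<dots> = Phi \<mu> \<chi> p + Phi \<mu> \<chi> q"
    by (subst (1 2) Phi_superset[of ?K]) auto
  finally show ?thesis .
qed

lemma Phi_zero[simp]: "Phi \<mu> \<chi> 0 = 0" by (simp add: Phi_def)

lemma Phi_uminus: "Phi \<mu> \<chi> (- p) = - Phi \<mu> \<chi> p"
  using Phi_add[of \<mu> \<chi> p "-p"] by (simp add: eq_neg_iff_add_eq_0 add.commute)

lemma Phi_diff: "Phi \<mu> \<chi> (p - q) = Phi \<mu> \<chi> p - Phi \<mu> \<chi> q"
  unfolding diff_conv_add_uminus Phi_add Phi_uminus ..

lemma Phi_sum: "Phi \<mu> \<chi> (sum f A) = (\<Sum>x\<in>A. Phi \<mu> \<chi> (f x))"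
  by (induction A rule: infinite_finite_induct) (simp_all add: Phi_add)

lemma Phi_single: "Phi \<mu> \<chi> (Poly_Mapping.single m c) = Poly_Mapping.single (\<mu> m) (\<chi> m * c)"
  by (subst Phi_superset[of "{m}"]) auto

lemma poly_sum_singles: "p = (\<Sum>m\<in>Poly_Mapping.keys p. Poly_Mapping.single m (Poly_Mapping.lookup p m))"
  by (rule poly_mapping_eqI) (simp add: lookup_sum lookup_single when_def in_keys_iff sum.delta)

lemma Phi_mult:
  assumes mu: "\<And>a b. \<mu> (a + b) = \<mu> a + \<mu> b" and chi: "\<And>a b. \<chi> (a + b) = \<chi> a * \<chi> b"
  shows "Phi \<mu> \<chi> (p * q) = Phi \<mu> \<chi> p * Phi \<mu> \<chi> q"
proof -
  let ?P = "Poly_Mapping.keys p" and ?Q = "Poly_Mapping.keys q"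
  have "p * q = (\<Sum>a\<in>?P. Poly_Mapping.single a (Poly_Mapping.lookup p a)) * (\<Sum>b\<in>?Q. Poly_Mapping.single b (Poly_Mapping.lookup q b))"
    by (subst (1) poly_sum_singles, subst (2) poly_sum_singles) (rule refl)
  also have "\<dots> = (\<Sum>a\<in>?P. \<Sum>b\<in>?Q. Poly_Mapping.single (a + b) (Poly_Mapping.lookup p a * Poly_Mapping.lookup q b))"
    by (simp add: sum_product mult_single)
  finally have pq: "p * q = \<dots>" .
  have "Phi \<mu> \<chi> (p * q) = (\<Sum>a\<in>?P. \<Sum>b\<in>?Q. Poly_Mapping.single (\<mu> a + \<mu> b) (\<chi> a * \<chi> b * (Poly_Mapping.lookup p a * Poly_Mapping.lookup q b)))"
    unfolding pq Phi_sum Phi_single mu chi ..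
  also have "\<dots> = (\<Sum>a\<in>?P. Poly_Mapping.single (\<mu> a) (\<chi> a * Poly_Mapping.lookup p a)) * (\<Sum>b\<in>?Q. Poly_Mapping.single (\<mu> b) (\<chi> b * Poly_Mapping.lookup q b))"
    by (simp add: sum_product mult_single ac_simps)
  also have "\<dots> = Phi \<mu> \<chi> p * Phi \<mu> \<chi> q" by (simp add: Phi_def)
  finally show ?thesis .
qed

lemma gridN_out: "a \<in> gridN n r \<Longrightarrow> k \<notin> {1..n} \<Longrightarrow> a k = 0"
  by (simp add: gridN_def)

lemma gridN_in: "a \<in> gridN n r \<Longrightarrow> k \<in> {1..n} \<Longrightarrow> a k \<in> {1..r k}"
  by (simp add: gridN_def)

lemma gridN_eq: assumes "a \<in> gridN n r" "b \<in> gridN n r" "\<And>k. k \<in> {1..n} \<Longrightarrow> a k = b k" shows "a = b"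
proof
  fix k show "a k = b k" using assms gridN_out[of a n r k] gridN_out[of b n r k] by (cases "k \<in> {1..n}") auto
qed

definition enc :: "nat \<Rightarrow> (nat \<Rightarrow> nat) \<Rightarrow> nat list" where
  "enc n a = map a [1..<Suc n]"

lemma enc_inj: "a \<in> gridN n r \<Longrightarrow> b \<in> gridN n r \<Longrightarrow> enc n a = enc n b \<Longrightarrow> a = b"
  by (rule gridN_eq) (auto simp: enc_def)

lemma finite_gridN: "finite (gridN n r)"
proof -
  let ?M = "Max (r ` {1..n})"
  have inj: "inj_on (enc n) (gridN n r)" by (rule inj_onI) (rule enc_inj)
  have sub: "enc n ` gridN n r \<subseteq> {xs. set xs \<subseteq> {0..?M} \<and> length xs = n}"
  proof
    fix xs assume "xs \<in> enc n ` gridN n r"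
    then obtain a where a: "a \<in> gridN n r" "xs = enc n a" by auto
    have "a k \<le> ?M" if k: "k \<in> {1..n}" for k
    proof -
      have "a k \<le> r k" using gridN_in[OF a(1) k] by auto
      also have "r k \<le> ?M" using k by (intro Max_ge) auto
      finally show ?thesis .
    qed
    then show "xs \<in> {xs. set xs \<subseteq> {0..?M} \<and> length xs = n}" using a by (auto simp: enc_def)
  qed
  have fin: "finite {xs. set xs \<subseteq> {0..?M} \<and> length xs = n}" by (rule finite_lists_length_eq) simp
  show ?thesis by (rule finite_imageD[OF finite_subset[OF sub fin] inj])
qed

lemma hdist_fin: assumes "a \<in> gridN n r" "b \<in> gridN n r" shows "finite {j. a j \<noteq> b j}"
proof (rule finite_subset[of _ "{1..n}"])
  show "{j. a j \<noteq> b j} \<subseteq> {1..n}"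
  proof
    fix j assume j: "j \<in> {j. a j \<noteq> b j}"
    show "j \<in> {1..n}"
    proof (rule ccontr)
      assume "j \<notin> {1..n}"
      then have "a j = 0" "b j = 0" using gridN_out[OF assms(1)] gridN_out[OF assms(2)] by auto
      then show False using j by simp
    qed
  qed
qed simp

lemma hdist_le1: assumes "a \<in> gridN n r" "b \<in> gridN n r" "hdist a b \<le> 1"
  obtains j where "\<And>k. k \<noteq> j \<Longrightarrow> a k = b k"
proof -
  have fin: "finite {j. a j \<noteq> b j}" using hdist_fin assms by blast
  show ?thesis
  proof (cases "{j. a j \<noteq> b j} = {}")
    case True then show ?thesis using that by auto
  next
    case False
    then have "card {j. a j \<noteq> b j} \<noteq> 0" using fin by simp
    then have "card {j. a j \<noteq> b j} = 1" using assms(3) unfolding hdist_def by linarith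
    then obtain j where "{j. a j \<noteq> b j} = {j}" by (rule card_1_singletonE)
    then show ?thesis using that by blast
  qed
qed

lemma hdist_upd: "hdist a (a(i := v)) \<le> 1"
proof -
  have "{j. a j \<noteq> (a(i:=v)) j} \<subseteq> {i}" by auto
  then have "card {j. a j \<noteq> (a(i:=v)) j} \<le> card {i}" by (intro card_mono) auto
  then show ?thesis by (simp add: hdist_def)
qed

lemma hdist_two: assumes "i \<noteq> j" "{k. a k \<noteq> b k} = {i, j}" shows "hdist a b = 2"
  using assms by (simp add: hdist_def)

locale setting =
  fixes n t :: nat and r :: "nat \<Rightarrow> nat" and S :: "(nat \<Rightarrow> nat) set"
  assumes t: "t \<in> {1..n}" and SG: "S \<subseteq> gridN n r" and swS: "switchable t S"
begin

abbreviation "G \<equiv> gridN n r"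
abbreviation "E \<equiv> {(x, y). x \<in> S \<and> y \<in> S \<and> hdist x y \<le> 1}"

lemma conn_refl: "a \<in> S \<Longrightarrow> connected_in S a a" by (simp add: connected_in_def)

lemma hdist_sym: "hdist a b = hdist b a"
proof -
  have "{j. a j \<noteq> b j} = {j. b j \<noteq> a j}" by auto
  then show ?thesis by (simp add: hdist_def)
qed

lemma conn_sym: "connected_in S a b \<Longrightarrow> connected_in S b a"
proof -
  have "sym E" by (auto simp: sym_def hdist_sym)
  then show "connected_in S a b \<Longrightarrow> connected_in S b a"
  proof -
    assume ab: "connected_in S a b"
    have "sym (E\<^sup>*)" by (rule sym_rtrancl) fact
    then show ?thesis using ab unfolding connected_in_def by (auto dest: symD)
  qed
qed

lemma conn_trans: "connected_in S a b \<Longrightarrow> connected_in S b c \<Longrightarrow> connected_in S a c"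
  unfolding connected_in_def by (meson rtrancl_trans)

lemma conn_step: "a \<in> S \<Longrightarrow> b \<in> S \<Longrightarrow> hdist a b \<le> 1 \<Longrightarrow> connected_in S a b"
  unfolding connected_in_def by auto

lemma lemmaA: assumes "connected_in S a b" "i \<in> {1..t}" shows "a(i := b i) \<in> S"
proof -
  have ab: "a \<in> S" "b \<in> S" "(a, b) \<in> E\<^sup>*" using assms by (auto simp: connected_in_def)
  have "(a, b) \<in> E\<^sup>* \<Longrightarrow> a(i := b i) \<in> S"
  proof (induction rule: converse_rtrancl_induct)
    case base then show ?case using ab by simp
  next
    case (step y z)
    then have yz: "y \<in> S" "z \<in> S" "hdist y z \<le> 1" by auto
    then obtain j where j: "\<And>k. k \<noteq> j \<Longrightarrow> y k = z k" using SG hdist_le1 by blast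
    show ?case
    proof (cases "j = i \<or> y j = z j")
      case True
      then have "\<forall>k. k \<noteq> i \<longrightarrow> y k = z k" using j by metis
      then have "y(i := b i) = z(i := b i)" by (auto intro!: ext)
      then show ?thesis using step.IH by (simp only:)
    next
      case False
      then have ji: "j \<noteq> i" and yzj: "y j \<noteq> z j" by auto
      show ?thesis
      proof (cases "z i = b i")
        case True
        then have "y(i := b i) = y" using j ji by (auto intro!: ext)
        then show ?thesis using yz by simp
      next
        case False
        let ?z = "z(i := b i)"
        have "{k. y k \<noteq> ?z k} = {i, j}" using j ji yzj False by auto
        then have "hdist y ?z = 2" using ji hdist_two by metis
        moreover have "?z \<in> S" using step.IH by (simp only:)
        ultimately have "sw i y ?z \<in> S" using swS yz assms(2) unfolding switchable_def by blast
        then show ?thesis by (metis sw_def fun_upd_same)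
      qed
    qed
  qed
  then show ?thesis using ab by simp
qed

lemma sw_conn: assumes "connected_in S a b" "i \<in> {1..t}" shows "connected_in S a (sw i a b)"
proof -
  have "a \<in> S" using assms by (simp add: connected_in_def)
  then show ?thesis unfolding sw_def using lemmaA[OF assms] hdist_upd by (intro conn_step) auto
qed

definition cid :: "(nat \<Rightarrow> nat) \<Rightarrow> nat list" where
  "cid a = Min (enc n ` {c. connected_in S a c})"

lemma conn_G: "connected_in S a b \<Longrightarrow> b \<in> G" using SG by (auto simp: connected_in_def)

lemma cid_eq: "connected_in S a b \<Longrightarrow> cid a = cid b"
proof -
  assume "connected_in S a b"
  then have "{c. connected_in S a c} = {c. connected_in S b c}"
    using conn_sym conn_trans by blast
  then show ?thesis by (simp add: cid_def)
qed

lemma cid_conn: assumes "a \<in> S" "b \<in> S" "cid a = cid b" shows "connected_in S a b"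
proof -
  have fa: "finite (enc n ` {c. connected_in S a c})" "finite (enc n ` {c. connected_in S b c})"
    using finite_gridN[of n r] conn_G by (auto intro: finite_subset)
  have "cid a \<in> enc n ` {c. connected_in S a c}" unfolding cid_def
    using fa conn_refl[OF assms(1)] by (intro Min_in) auto
  then obtain c where c: "connected_in S a c" "enc n c = cid a" by auto
  have "cid b \<in> enc n ` {c. connected_in S b c}" unfolding cid_def
    using fa conn_refl[OF assms(2)] by (intro Min_in) auto
  then obtain d where d: "connected_in S b d" "enc n d = cid b" by auto
  have "c = d" using c d assms(3) conn_G by (metis enc_inj)
  then show ?thesis using c d conn_sym conn_trans by blast
qed

end

context setting begin

lemma cid_len: assumes "a \<in> S" shows "length (cid a) = n"
proof -
  have fa: "finite (enc n ` {c. connected_in S a c})"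
    using finite_gridN[of n r] conn_G by (auto intro: finite_subset)
  have "cid a \<in> enc n ` {c. connected_in S a c}" unfolding cid_def
    using fa conn_refl[OF assms] by (intro Min_in) auto
  then show ?thesis by (auto simp: enc_def)
qed

definition code0 :: "(nat \<Rightarrow> nat) \<Rightarrow> nat list" where
  "code0 a = 0 # cid a @ map a [Suc t..<Suc n]"
definition code1 :: "(nat \<Rightarrow> nat) \<Rightarrow> nat \<Rightarrow> nat list" where
  "code1 a j = 1 # j # a j # cid a"
definition code2 :: "(nat \<Rightarrow> nat) \<Rightarrow> nat list" where
  "code2 a = 2 # enc n a"

lemma code_neq[simp]: "code0 a \<noteq> code1 b j" "code1 b j \<noteq> code0 a" "code0 a \<noteq> code2 c" "code2 c \<noteq> code0 a"
   "code1 b j \<noteq> code2 c" "code2 c \<noteq> code1 b j"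
  by (simp_all add: code0_def code1_def code2_def)

lemma code1_eq: "code1 a j = code1 b i \<longleftrightarrow> j = i \<and> a j = b i \<and> cid a = cid b"
  by (auto simp: code1_def)

lemma code2_eq: "a \<in> G \<Longrightarrow> b \<in> G \<Longrightarrow> code2 a = code2 b \<longleftrightarrow> a = b"
  unfolding code2_def using enc_inj[of a n r b] by auto

lemma code0_eq: assumes "a \<in> S" "b \<in> S" "code0 a = code0 b"
  shows "cid a = cid b" "\<And>j. j \<notin> {1..t} \<Longrightarrow> a j = b j"
proof -
  have l: "length (cid a) = length (cid b)" using cid_len assms by simp
  have e: "cid a @ map a [Suc t..<Suc n] = cid b @ map b [Suc t..<Suc n]" using assms(3) by (simp add: code0_def)
  then show c: "cid a = cid b" using l append_eq_append_conv by blast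
  have m: "map a [Suc t..<Suc n] = map b [Suc t..<Suc n]" using e l append_eq_append_conv by blast
  fix j assume j: "j \<notin> {1..t}"
  show "a j = b j"
  proof (cases "j \<in> {1..n}")
    case True
    then have "j \<in> set [Suc t..<Suc n]" using j by (simp del: upt_Suc)
    moreover have "\<forall>x\<in>set [Suc t..<Suc n]. a x = b x" using m by (rule map_eq_conv[THEN iffD1])
    ultimately show ?thesis by blast
  next
    case False
    have "a \<in> G" "b \<in> G" using assms(1,2) SG by auto
    then show ?thesis using gridN_out False by metis
  qed
qed

definition w :: "(nat \<Rightarrow> nat) \<Rightarrow> nat list \<Rightarrow>\<^sub>0 nat" where
  "w a = (if a \<in> S then Poly_Mapping.single (code0 a) 1 + (\<Sum>j\<in>{1..t}. Poly_Mapping.single (code1 a j) 1)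
          else Poly_Mapping.single (code2 a) 1)"

definition mu :: "((nat \<Rightarrow> nat) \<Rightarrow>\<^sub>0 nat) \<Rightarrow> nat list \<Rightarrow>\<^sub>0 nat" where
  "mu m = (\<Sum>a\<in>G. Poly_Mapping.map ((*) (Poly_Mapping.lookup m a)) (w a))"

lemma lookup_map_mult: "Poly_Mapping.lookup (Poly_Mapping.map ((*) (c::nat)) p) v = c * Poly_Mapping.lookup p v"
  by (auto simp: map.rep_eq when_def)

lemma lookup_mu: "Poly_Mapping.lookup (mu m) v = (\<Sum>a\<in>G. Poly_Mapping.lookup m a * Poly_Mapping.lookup (w a) v)"
  by (simp add: mu_def lookup_sum lookup_map_mult)

lemma mu_add: "mu (m1 + m2) = mu m1 + mu m2"
  by (rule poly_mapping_eqI) (simp add: lookup_mu lookup_add distrib_right sum.distrib)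

lemma sum_delta_nat: "finite A \<Longrightarrow> b \<in> A \<Longrightarrow> (\<Sum>a\<in>A. (if b = a then Suc 0 else 0) * (f a :: nat)) = f b"
proof -
  assume A: "finite A" "b \<in> A"
  have "(\<Sum>a\<in>A. (if b = a then Suc 0 else 0) * f a) = (\<Sum>a\<in>A. if b = a then f a else 0)"
    by (rule sum.cong) auto
  also have "\<dots> = f b" using A by (simp add: sum.delta)
  finally show ?thesis .
qed

lemma sum_delta_nat': "finite A \<Longrightarrow> b \<in> A \<Longrightarrow> (\<Sum>a\<in>A. (f a :: nat) * (if a = b then 1 else 0)) = f b"
proof -
  assume A: "finite A" "b \<in> A"
  have "(\<Sum>a\<in>A. f a * (if a = b then 1 else 0)) = (\<Sum>a\<in>A. if b = a then f a else 0)"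
    by (rule sum.cong) auto
  also have "\<dots> = f b" using A by (simp add: sum.delta)
  finally show ?thesis .
qed

lemma sum_pos_iff_nat: "finite A \<Longrightarrow> (0 < sum f A) = (\<exists>x\<in>A. 0 < (f x :: nat))"
  by (metis neq0_conv sum_eq_0_iff)

lemma mu_single: "b \<in> G \<Longrightarrow> mu (Poly_Mapping.single b 1) = w b"
  by (rule poly_mapping_eqI) (simp add: lookup_mu lookup_single when_def finite_gridN sum_delta_nat)

lemma lookup_w_pos: "0 < Poly_Mapping.lookup (w a) v \<longleftrightarrow>
   (if a \<in> S then v = code0 a \<or> (\<exists>j\<in>{1..t}. v = code1 a j) else v = code2 a)"
  by (auto simp: w_def lookup_add lookup_sum lookup_single when_def sum_pos_iff_nat)

lemma mu_pos: "a \<in> G \<Longrightarrow> 0 < Poly_Mapping.lookup m a \<Longrightarrow> 0 < Poly_Mapping.lookup (w a) v \<Longrightarrow> 0 < Poly_Mapping.lookup (mu m) v"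
  unfolding lookup_mu
  by (rule order.strict_trans2[OF _ member_le_sum[of a]]) (simp_all add: finite_gridN)

lemma mu_pos_ex: "0 < Poly_Mapping.lookup (mu m) v \<Longrightarrow> \<exists>a\<in>G. 0 < Poly_Mapping.lookup m a \<and> 0 < Poly_Mapping.lookup (w a) v"
proof (rule ccontr)
  assume a: "0 < Poly_Mapping.lookup (mu m) v" "\<not> (\<exists>a\<in>G. 0 < Poly_Mapping.lookup m a \<and> 0 < Poly_Mapping.lookup (w a) v)"
  then have "\<forall>a\<in>G. Poly_Mapping.lookup m a * Poly_Mapping.lookup (w a) v = 0" by auto
  then have "Poly_Mapping.lookup (mu m) v = 0" unfolding lookup_mu by (intro sum.neutral) auto
  then show False using a by simp
qed

lemma lookup_w_code2: "a \<in> G \<Longrightarrow> b \<in> G - S \<Longrightarrow> Poly_Mapping.lookup (w a) (code2 b) = (if a = b then 1 else 0)"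
  by (auto simp: w_def lookup_add lookup_sum lookup_single when_def code2_eq)

lemma lookup_mu_code2: "b \<in> G - S \<Longrightarrow> Poly_Mapping.lookup (mu m) (code2 b) = Poly_Mapping.lookup m b"
  unfolding lookup_mu by (subst sum_delta_nat'[symmetric, of G b]) (auto simp: finite_gridN lookup_w_code2 intro!: sum.cong)

end

definition X :: "('a \<Rightarrow>\<^sub>0 nat) \<Rightarrow> ('a \<Rightarrow>\<^sub>0 nat) \<Rightarrow>\<^sub>0 'k::field" where
  "X m = Poly_Mapping.single m 1"

lemma X_add: "X (m1 + m2) = (X m1 * X m2 :: _ \<Rightarrow>\<^sub>0 'k::field)"
  by (simp add: X_def mult_single)

lemma var_X: "var a = X (Poly_Mapping.single a 1)"
  by (simp add: var_def X_def)

lemma X_polyN: "Poly_Mapping.keys m \<subseteq> gridN n r \<Longrightarrow> (X m :: 'k::field mpoly) \<in> polyN n r"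
  by (simp add: X_def polyN_def)

lemma var_polyN: "a \<in> gridN n r \<Longrightarrow> (var a :: 'k::field mpoly) \<in> polyN n r"
  by (simp add: var_X X_polyN)

lemma sw_G: assumes "a \<in> gridN n r" "b \<in> gridN n r" "i \<in> {1..n}" shows "sw i a b \<in> gridN n r"
  using assms unfolding sw_def gridN_def by auto

lemma single_split: assumes "0 < Poly_Mapping.lookup m b"
  shows "m = (m - Poly_Mapping.single b 1) + Poly_Mapping.single b (1::nat)"
proof (rule poly_mapping_eqI)
  fix k show "Poly_Mapping.lookup m k = Poly_Mapping.lookup (m - Poly_Mapping.single b 1 + Poly_Mapping.single b 1) k"
    using assms by (cases "k = b") (auto simp: lookup_add lookup_minus lookup_single when_def)
qed

lemma double_split: assumes "0 < Poly_Mapping.lookup m a" "0 < Poly_Mapping.lookup m c" "a \<noteq> c"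
  shows "m = (m - Poly_Mapping.single a 1 - Poly_Mapping.single c 1) + Poly_Mapping.single a 1 + Poly_Mapping.single c (1::nat)"
proof (rule poly_mapping_eqI)
  fix k show "Poly_Mapping.lookup m k = Poly_Mapping.lookup (m - Poly_Mapping.single a 1 - Poly_Mapping.single c 1 + Poly_Mapping.single a 1 + Poly_Mapping.single c 1) k"
    using assms by (cases "k = a"; cases "k = c") (auto simp: lookup_add lookup_minus lookup_single when_def)
qed

lemma keys_minus_nat: "Poly_Mapping.keys (m - m' :: 'a \<Rightarrow>\<^sub>0 nat) \<subseteq> Poly_Mapping.keys m"
  by (auto simp: in_keys_iff lookup_minus)

context setting begin

lemma S_G: "a \<in> S \<Longrightarrow> a \<in> G" using SG by auto

lemma t_le: "i \<in> {1..t} \<Longrightarrow> i \<in> {1..n}" using t by auto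

lemma gens_carrier: "{fbin i a b | i a b. i \<in> {1..t} \<and> connected_in S a b} \<subseteq> (polyN n r :: 'k::field mpoly set)"
proof
  fix f :: "'k mpoly" assume "f \<in> {fbin i a b | i a b. i \<in> {1..t} \<and> connected_in S a b}"
  then obtain i a b where f: "f = fbin i a b" "i \<in> {1..t}" "connected_in S a b" by auto
  then have ab: "a \<in> G" "b \<in> G" using S_G by (auto simp: connected_in_def)
  have i: "i \<in> {1..n}" using f t_le by auto
  show "f \<in> polyN n r" unfolding f fbin_def
    by (intro polyN_diff polyN_mult var_polyN ab sw_G i)
qed

lemma Itilde_ideal: "ideal (Itilde n r t S :: 'k::field mpoly set) (ringR n r)"
proof -
  interpret cring "ringR n r :: 'k mpoly ring" by (rule cring_R)
  show ?thesis unfolding Itilde_def by (rule genideal_ideal) (simp only: R_simps, rule gens_carrier)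
qed

lemma gen_in: "i \<in> {1..t} \<Longrightarrow> connected_in S a b \<Longrightarrow> (fbin i a b :: 'k::field mpoly) \<in> Itilde n r t S"
proof -
  assume "i \<in> {1..t}" "connected_in S a b"
  interpret cring "ringR n r :: 'k mpoly ring" by (rule cring_R)
  have "{fbin i a b | i a b. i \<in> {1..t} \<and> connected_in S a b} \<subseteq> (Itilde n r t S :: 'k mpoly set)"
    unfolding Itilde_def by (rule genideal_self) (simp only: R_simps, rule gens_carrier)
  then show ?thesis using \<open>i \<in> {1..t}\<close> \<open>connected_in S a b\<close> by blast
qed

lemma w_swap: assumes ac: "connected_in S a c" and i: "i \<in> {1..t}"
  shows "w (a(i := c i)) + w (c(i := a i)) = w a + w c"
proof -
  let ?a = "a(i := c i)" and ?c = "c(i := a i)"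
  have ca: "connected_in S c a" using conn_sym ac .
  have inS: "a \<in> S" "c \<in> S" "?a \<in> S" "?c \<in> S" using ac lemmaA[OF ac i] lemmaA[OF ca i]
    by (auto simp: connected_in_def)
  have C: "cid ?a = cid a" "cid ?c = cid a" "cid c = cid a"
    using cid_eq[OF sw_conn[OF ac i]] cid_eq[OF sw_conn[OF ca i]] cid_eq[OF ac] by (simp_all add: sw_def)
  have tl: "map ?a [Suc t..<Suc n] = map a [Suc t..<Suc n]" "map ?c [Suc t..<Suc n] = map c [Suc t..<Suc n]"
    using i by auto
  have c0: "code0 ?a = code0 a" "code0 ?c = code0 c" using C tl by (simp_all add: code0_def)
  have pw: "Poly_Mapping.single (code1 ?a j) 1 + Poly_Mapping.single (code1 ?c j) 1
      = Poly_Mapping.single (code1 a j) 1 + Poly_Mapping.single (code1 c j) (1::nat)" for j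
    using C by (cases "j = i") (simp_all add: code1_def add.commute)
  have "(\<Sum>j\<in>{1..t}. Poly_Mapping.single (code1 ?a j) 1) + (\<Sum>j\<in>{1..t}. Poly_Mapping.single (code1 ?c j) (1::nat))
      = (\<Sum>j\<in>{1..t}. Poly_Mapping.single (code1 a j) 1) + (\<Sum>j\<in>{1..t}. Poly_Mapping.single (code1 c j) 1)"
    unfolding sum.distrib[symmetric] pw ..
  then show ?thesis using inS c0 by (simp add: w_def ac_simps)
qed

end

context setting begin

lemma lemmaC:
  assumes m: "Poly_Mapping.keys m \<subseteq> G" and b: "b \<in> S"
    and P0: "0 < Poly_Mapping.lookup (mu m) (code0 b)"
    and P1: "\<forall>i\<in>{1..t}. 0 < Poly_Mapping.lookup (mu m) (code1 b i)"
  shows "\<exists>m2. Poly_Mapping.keys m2 \<subseteq> G \<and> mu m2 = mu m \<and> (X m - X m2 :: 'k::field mpoly) \<in> Itilde n r t S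
     \<and> 0 < Poly_Mapping.lookup m2 b"
proof -
  let ?I = "Itilde n r t S :: 'k mpoly set"
  have I: "ideal ?I (ringR n r)" by (rule Itilde_ideal)
  have main: "\<exists>m2 a. Poly_Mapping.keys m2 \<subseteq> G \<and> mu m2 = mu m \<and> (X m - X m2 :: 'k mpoly) \<in> ?I
     \<and> 0 < Poly_Mapping.lookup m2 a \<and> a \<in> S \<and> cid a = cid b \<and> (\<forall>j. j \<notin> {1..t} \<longrightarrow> a j = b j)
     \<and> (\<forall>j\<in>{1..k}. a j = b j)" if "k \<le> t" for k
    using that
  proof (induction k)
    case 0
    obtain a where a: "a \<in> G" "0 < Poly_Mapping.lookup m a" "0 < Poly_Mapping.lookup (w a) (code0 b)"
      using mu_pos_ex[OF P0] by blast
    have aS: "a \<in> S" and ca: "code0 b = code0 a" using a(3) unfolding lookup_w_pos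
      by (auto split: if_splits)
    have "cid b = cid a" "\<And>j. j \<notin> {1..t} \<Longrightarrow> b j = a j" using code0_eq[OF b aS ca] by auto
    moreover have "(X m - X m :: 'k mpoly) \<in> ?I" using ideal_zero[OF I] by simp
    ultimately show ?case using a aS m by (intro exI[of _ m] exI[of _ a]) simp
  next
    case (Suc k)
    then obtain m2 a where m2: "Poly_Mapping.keys m2 \<subseteq> G" "mu m2 = mu m" "(X m - X m2 :: 'k mpoly) \<in> ?I"
      "0 < Poly_Mapping.lookup m2 a" "a \<in> S" "cid a = cid b" "\<forall>j. j \<notin> {1..t} \<longrightarrow> a j = b j"
      "\<forall>j\<in>{1..k}. a j = b j" by auto
    define i where "i = Suc k"
    have i: "i \<in> {1..t}" using Suc.prems i_def by auto
    show ?case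
    proof (cases "a i = b i")
      case True
      have "\<forall>j\<in>{1..Suc k}. a j = b j" using m2(8) True i_def by (auto simp: le_Suc_eq)
      then show ?thesis using m2 by (intro exI[of _ m2] exI[of _ a]) simp
    next
      case False
      have "0 < Poly_Mapping.lookup (mu m2) (code1 b i)" using P1 i m2(2) by simp
      then obtain c where c: "c \<in> G" "0 < Poly_Mapping.lookup m2 c" "0 < Poly_Mapping.lookup (w c) (code1 b i)"
        using mu_pos_ex by blast
      have cS: "c \<in> S" and "\<exists>j\<in>{1..t}. code1 b i = code1 c j" using c(3) unfolding lookup_w_pos
        by (auto split: if_splits)
      then obtain j where "code1 b i = code1 c j" by blast
      then have ci: "c i = b i" and cc: "cid c = cid b" unfolding code1_eq by auto
      have ac_ne: "a \<noteq> c" using False ci by auto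
      have ac: "connected_in S a c" using cid_conn[OF m2(5) cS] m2(6) cc by simp
      have ca: "connected_in S c a" using conn_sym[OF ac] .
      let ?a = "a(i := c i)" and ?c = "c(i := a i)"
      have inS: "?a \<in> S" "?c \<in> S" using lemmaA[OF ac i] lemmaA[OF ca i] by auto
      define rest where "rest = m2 - Poly_Mapping.single a 1 - Poly_Mapping.single c 1"
      define m3 where "m3 = rest + Poly_Mapping.single ?a 1 + Poly_Mapping.single ?c 1"
      have m2eq: "m2 = rest + Poly_Mapping.single a 1 + Poly_Mapping.single c 1"
        unfolding rest_def by (rule double_split[OF m2(4) c(2) ac_ne])
      have "Poly_Mapping.keys rest \<subseteq> Poly_Mapping.keys (m2 - Poly_Mapping.single a 1)"
        unfolding rest_def by (rule keys_minus_nat)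
      also have "\<dots> \<subseteq> Poly_Mapping.keys m2" by (rule keys_minus_nat)
      finally have krest: "Poly_Mapping.keys rest \<subseteq> G" using m2(1) by (rule order.trans)
      have inG: "?a \<in> G" "?c \<in> G" "a \<in> G" "c \<in> G" using inS m2(5) cS by (simp_all add: S_G)
      have km3: "Poly_Mapping.keys m3 \<subseteq> G" using krest inG unfolding m3_def keys_add_nat by simp
      have "mu m3 = mu rest + (w ?a + w ?c)" unfolding m3_def mu_add mu_single[OF inG(1)] mu_single[OF inG(2)] by (simp only: add.assoc)
      also have "\<dots> = mu rest + (w a + w c)" using w_swap[OF ac i] by simp
      also have "\<dots> = mu m2" unfolding m2eq mu_add mu_single[OF inG(3)] mu_single[OF inG(4)] by (simp only: add.assoc)
      finally have mu3: "mu m3 = mu m" using m2(2) by simp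
      have "(X m2 - X m3 :: 'k mpoly) = X rest * fbin i a c"
        unfolding m2eq m3_def by (simp add: X_add var_X fbin_def sw_def algebra_simps)
      moreover have "(X rest :: 'k mpoly) \<in> polyN n r" using krest by (rule X_polyN)
      ultimately have "(X m2 - X m3 :: 'k mpoly) \<in> ?I" using ideal_lmult[OF I _ gen_in[OF i ac]] by simp
      then have "(X m - X m2) + (X m2 - X m3 :: 'k mpoly) \<in> ?I" by (rule ideal_add[OF I m2(3)])
      then have Xm3: "(X m - X m3 :: 'k mpoly) \<in> ?I" by simp
      have l3: "0 < Poly_Mapping.lookup m3 ?a" unfolding m3_def by (simp add: lookup_add)
      have "cid ?a = cid b" using cid_eq[OF sw_conn[OF ac i]] m2(6) by (simp add: sw_def)
      moreover have "\<forall>j. j \<notin> {1..t} \<longrightarrow> ?a j = b j" using m2(7) i by auto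
      moreover have "\<forall>j\<in>{1..Suc k}. ?a j = b j" using m2(8) ci i_def by (auto simp: le_Suc_eq)
      ultimately show ?thesis using km3 mu3 Xm3 l3 inS by (intro exI[of _ m3] exI[of _ ?a]) (simp del: fun_upd_apply)
    qed
  qed
  obtain m2 a where m2: "Poly_Mapping.keys m2 \<subseteq> G" "mu m2 = mu m" "(X m - X m2 :: 'k mpoly) \<in> ?I"
      "0 < Poly_Mapping.lookup m2 a" "\<forall>j. j \<notin> {1..t} \<longrightarrow> a j = b j" "\<forall>j\<in>{1..t}. a j = b j"
    using main[of t] by auto
  have "a = b"
  proof
    fix j show "a j = b j" using m2(5,6) by (cases "j \<in> {1..t}") auto
  qed
  then show ?thesis using m2 by (intro exI[of _ m2]) simp
qed

end

context setting begin

definition degG :: "((nat \<Rightarrow> nat) \<Rightarrow>\<^sub>0 nat) \<Rightarrow> nat" where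
  "degG m = (\<Sum>a\<in>G. Poly_Mapping.lookup m a)"

lemma degG_add1: "b \<in> G \<Longrightarrow> degG (m + Poly_Mapping.single b 1) = Suc (degG m)"
proof -
  assume b: "b \<in> G"
  have "degG (m + Poly_Mapping.single b 1) = degG m + (\<Sum>a\<in>G. Poly_Mapping.lookup (Poly_Mapping.single b 1) a)"
    by (simp add: degG_def lookup_add sum.distrib)
  also have "(\<Sum>a\<in>G. Poly_Mapping.lookup (Poly_Mapping.single b (1::nat)) a) = 1"
    using b by (simp add: lookup_single when_def finite_gridN sum.delta)
  finally show ?thesis by simp
qed

lemma mu_zero: "mu 0 = 0"
  by (rule poly_mapping_eqI) (simp add: lookup_mu)

lemma cancel_step:
  assumes b: "b \<in> G" and l1: "0 < Poly_Mapping.lookup m b" and l2: "0 < Poly_Mapping.lookup m' b"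
    and k: "Poly_Mapping.keys m \<subseteq> G" "Poly_Mapping.keys m' \<subseteq> G" and mu: "mu m = mu m'"
    and IH: "\<And>p p'. degG p' < degG m' \<Longrightarrow> Poly_Mapping.keys p \<subseteq> G \<Longrightarrow> Poly_Mapping.keys p' \<subseteq> G \<Longrightarrow> mu p = mu p'
              \<Longrightarrow> (X p - X p' :: 'k::field mpoly) \<in> Itilde n r t S"
  shows "(X m - X m' :: 'k mpoly) \<in> Itilde n r t S"
proof -
  let ?I = "Itilde n r t S :: 'k mpoly set"
  have I: "ideal ?I (ringR n r)" by (rule Itilde_ideal)
  define p where "p = m - Poly_Mapping.single b 1"
  define p' where "p' = m' - Poly_Mapping.single b 1"
  have m: "m = p + Poly_Mapping.single b 1" unfolding p_def by (rule single_split[OF l1])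
  have m': "m' = p' + Poly_Mapping.single b 1" unfolding p'_def by (rule single_split[OF l2])
  have kp: "Poly_Mapping.keys p \<subseteq> G" unfolding p_def using keys_minus_nat k(1) by (rule order.trans)
  have kp': "Poly_Mapping.keys p' \<subseteq> G" unfolding p'_def using keys_minus_nat k(2) by (rule order.trans)
  have "mu p + w b = mu p' + w b" using mu unfolding m m' mu_add mu_single[OF b] .
  then have mup: "mu p = mu p'" by simp
  have "degG p' < degG m'" using degG_add1[OF b, of p'] m' by simp
  then have "(X p - X p' :: 'k mpoly) \<in> ?I" using IH kp kp' mup by blast
  then have "X (Poly_Mapping.single b 1) * (X p - X p' :: 'k mpoly) \<in> ?I"
    using ideal_lmult[OF I X_polyN] b by simp
  moreover have "X (Poly_Mapping.single b 1) * (X p - X p' :: 'k mpoly) = X m - X m'"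
    unfolding m m' X_add by (simp add: algebra_simps)
  ultimately show ?thesis by simp
qed

lemma lemmaB:
  "Poly_Mapping.keys m \<subseteq> G \<Longrightarrow> Poly_Mapping.keys m' \<subseteq> G \<Longrightarrow> mu m = mu m'
    \<Longrightarrow> (X m - X m' :: 'k::field mpoly) \<in> Itilde n r t S"
proof (induction "degG m'" arbitrary: m m' rule: less_induct)
  case less
  let ?I = "Itilde n r t S :: 'k mpoly set"
  have I: "ideal ?I (ringR n r)" by (rule Itilde_ideal)
  note IH = less.hyps
  show ?case
  proof (cases "\<exists>b\<in>G. 0 < Poly_Mapping.lookup m' b")
    case True
    then obtain b where b: "b \<in> G" "0 < Poly_Mapping.lookup m' b" by blast
    show ?thesis
    proof (cases "b \<in> S")
      case False
      have "Poly_Mapping.lookup m b = Poly_Mapping.lookup m' b"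
        using lookup_mu_code2[of b m] lookup_mu_code2[of b m'] less.prems(3) b False by simp
      then have pos: "0 < Poly_Mapping.lookup m b" using b(2) by simp
      show ?thesis by (rule cancel_step[OF b(1) pos b(2) less.prems]) (rule IH)
    next
      case bS: True
      have "0 < Poly_Mapping.lookup (mu m') (code0 b)"
        using mu_pos[OF b] bS by (simp add: lookup_w_pos)
      moreover have "\<forall>i\<in>{1..t}. 0 < Poly_Mapping.lookup (mu m') (code1 b i)"
        using mu_pos[OF b] bS by (auto simp: lookup_w_pos)
      ultimately obtain m2 where m2: "Poly_Mapping.keys m2 \<subseteq> G" "mu m2 = mu m"
          "(X m - X m2 :: 'k mpoly) \<in> ?I" "0 < Poly_Mapping.lookup m2 b"
        using lemmaC[OF less.prems(1) bS] less.prems(3) by auto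
      have mm: "mu m2 = mu m'" using m2(2) less.prems(3) by simp
      have "(X m2 - X m' :: 'k mpoly) \<in> ?I"
        by (rule cancel_step[OF b(1) m2(4) b(2) m2(1) less.prems(2) mm]) (rule IH)
      then have "(X m - X m2) + (X m2 - X m' :: 'k mpoly) \<in> ?I" by (rule ideal_add[OF I m2(3)])
      then show ?thesis by simp
    qed
  next
    case False
    then have z: "\<forall>b\<in>G. Poly_Mapping.lookup m' b = 0" by auto
    have m'0: "m' = 0"
    proof (rule poly_mapping_eqI)
      fix k show "Poly_Mapping.lookup m' k = Poly_Mapping.lookup 0 k"
        using z less.prems(2) by (cases "k \<in> G") (auto simp: in_keys_iff)
    qed
    have mu0: "mu m = 0" using less.prems(3) m'0 by (simp add: mu_zero)
    have "\<forall>a\<in>G. Poly_Mapping.lookup m a = 0"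
    proof
      fix a assume a: "a \<in> G"
      show "Poly_Mapping.lookup m a = 0"
      proof (rule ccontr)
        assume "Poly_Mapping.lookup m a \<noteq> 0"
        then have pos: "0 < Poly_Mapping.lookup m a" by simp
        define v where "v = (if a \<in> S then code0 a else code2 a)"
        have "0 < Poly_Mapping.lookup (w a) v" unfolding v_def lookup_w_pos by simp
        then have "0 < Poly_Mapping.lookup (mu m) v" using mu_pos[OF a pos] by blast
        then show False using mu0 by simp
      qed
    qed
    then have m0: "m = 0"
    proof -
      assume z': "\<forall>a\<in>G. Poly_Mapping.lookup m a = 0"
      show "m = 0"
      proof (rule poly_mapping_eqI)
        fix k show "Poly_Mapping.lookup m k = Poly_Mapping.lookup 0 k"
          using z' less.prems(1) by (cases "k \<in> G") (auto simp: in_keys_iff)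
      qed
    qed
    show ?thesis using m0 m'0 ideal_zero[OF I] by simp
  qed
qed

end

lemma kernel_ideal:
  assumes mult: "\<And>p q. Phi \<mu> \<chi> (p * q) = Phi \<mu> \<chi> p * Phi \<mu> \<chi> q"
  shows "ideal {p \<in> polyN n r. Phi \<mu> \<chi> p = (0 :: _ \<Rightarrow>\<^sub>0 'k)} (ringR n r :: 'k::field mpoly ring)"
proof -
  interpret cring "ringR n r :: 'k mpoly ring" by (rule cring_R)
  let ?K = "{p \<in> polyN n r. Phi \<mu> \<chi> p = (0 :: _ \<Rightarrow>\<^sub>0 'k)}"
  have sg: "subgroup ?K (add_monoid (ringR n r :: 'k mpoly ring))"
  proof (rule subgroup.intro)
    show "?K \<subseteq> carrier (add_monoid (ringR n r :: 'k mpoly ring))" by (auto simp: R_simps)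
    show "\<And>x y. x \<in> ?K \<Longrightarrow> y \<in> ?K \<Longrightarrow> x \<otimes>\<^bsub>add_monoid (ringR n r)\<^esub> y \<in> ?K"
      by (auto simp: ringR_def polyN_add Phi_add)
    show "\<one>\<^bsub>add_monoid (ringR n r :: 'k mpoly ring)\<^esub> \<in> ?K"
      by (auto simp: ringR_def polyN_zero)
    fix x assume x: "x \<in> ?K"
    have "inv\<^bsub>add_monoid (ringR n r :: 'k mpoly ring)\<^esub> x = - x"
      using R_ainv[of x n r] x unfolding a_inv_def by simp
    then show "inv\<^bsub>add_monoid (ringR n r :: 'k mpoly ring)\<^esub> x \<in> ?K"
      using x by (simp add: polyN_uminus Phi_uminus)
  qed
  show ?thesis
  proof (rule idealI)
    show "ring (ringR n r :: 'k mpoly ring)" by (rule ring_axioms)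
    show "subgroup ?K (add_monoid (ringR n r :: 'k mpoly ring))" by (rule sg)
    fix a x assume a: "a \<in> ?K" and x: "x \<in> carrier (ringR n r :: 'k mpoly ring)"
    then show "x \<otimes>\<^bsub>ringR n r\<^esub> a \<in> ?K" "a \<otimes>\<^bsub>ringR n r\<^esub> x \<in> ?K"
      by (auto simp: R_simps polyN_mult mult)
  qed
qed

lemma ideal_sum: "ideal I (ringR n r :: 'k::field mpoly ring) \<Longrightarrow> (\<And>x. x \<in> A \<Longrightarrow> f x \<in> I) \<Longrightarrow> sum f A \<in> I"
  by (induction A rule: infinite_finite_induct) (auto intro: ideal_zero ideal_add)

lemma polyN_sum: "(\<And>x. x \<in> A \<Longrightarrow> f x \<in> polyN n r) \<Longrightarrow> (sum f A :: 'k::field mpoly) \<in> polyN n r"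
  by (induction A rule: infinite_finite_induct) (auto intro: polyN_zero polyN_add)

lemma Phi_X: "Phi \<mu> \<chi> (X m) = Poly_Mapping.single (\<mu> m) (\<chi> m)"
  by (simp add: X_def Phi_single)

context setting begin

definition chi0 :: "((nat \<Rightarrow> nat) \<Rightarrow>\<^sub>0 nat) \<Rightarrow> 'k::field" where
  "chi0 m = (if \<forall>a\<in>G - S. Poly_Mapping.lookup m a = 0 then 1 else 0)"

lemma chi0_add: "chi0 (m1 + m2) = (chi0 m1 * chi0 m2 :: 'k::field)"
  by (auto simp: chi0_def lookup_add)

lemma Phi1_mult: "Phi mu (\<lambda>_. 1 :: 'k::field) (p * q) = Phi mu (\<lambda>_. 1) p * Phi mu (\<lambda>_. 1) q"
  by (rule Phi_mult) (simp_all add: mu_add)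

lemma Phi0_mult: "Phi mu (chi0 :: _ \<Rightarrow> 'k::field) (p * q) = Phi mu chi0 p * Phi mu chi0 q"
  by (rule Phi_mult) (simp_all add: mu_add chi0_add)

lemma fbin_X: "fbin i a b = (X (Poly_Mapping.single a 1 + Poly_Mapping.single b 1)
    - X (Poly_Mapping.single (sw i a b) 1 + Poly_Mapping.single (sw i b a) 1) :: 'k::field mpoly)"
  by (simp add: fbin_def X_add var_X)

lemma chi0_S: "a \<in> S \<Longrightarrow> b \<in> S \<Longrightarrow> (chi0 (Poly_Mapping.single a 1 + Poly_Mapping.single b 1) :: 'k::field) = 1"
  by (auto simp: chi0_def lookup_add lookup_single when_def)

lemma Phi_gen: assumes "i \<in> {1..t}" "connected_in S a b" "\<chi> = (\<lambda>_. 1) \<or> \<chi> = chi0"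
  shows "Phi mu \<chi> (fbin i a b :: 'k::field mpoly) = 0"
proof -
  have ba: "connected_in S b a" using conn_sym assms(2) .
  have inS: "a \<in> S" "b \<in> S" "sw i a b \<in> S" "sw i b a \<in> S"
    using assms(2) lemmaA[OF assms(2,1)] lemmaA[OF ba assms(1)] by (auto simp: connected_in_def sw_def)
  have G: "a \<in> G" "b \<in> G" "sw i a b \<in> G" "sw i b a \<in> G" using inS S_G by auto
  have "mu (Poly_Mapping.single a 1 + Poly_Mapping.single b 1) = w a + w b"
    unfolding mu_add mu_single[OF G(1)] mu_single[OF G(2)] ..
  also have "\<dots> = w (sw i a b) + w (sw i b a)" using w_swap[OF assms(2,1)] by (simp add: sw_def)
  also have "\<dots> = mu (Poly_Mapping.single (sw i a b) 1 + Poly_Mapping.single (sw i b a) 1)"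
    unfolding mu_add mu_single[OF G(3)] mu_single[OF G(4)] ..
  finally have e: "mu (Poly_Mapping.single a 1 + Poly_Mapping.single b 1) = mu (Poly_Mapping.single (sw i a b) 1 + Poly_Mapping.single (sw i b a) 1)" .
  have "\<chi> (Poly_Mapping.single a 1 + Poly_Mapping.single b 1) = \<chi> (Poly_Mapping.single (sw i a b) 1 + Poly_Mapping.single (sw i b a) 1)"
    using assms(3) chi0_S[where 'k='k, OF inS(1,2)] chi0_S[where 'k='k, OF inS(3,4)] by auto
  then show ?thesis unfolding fbin_X Phi_diff Phi_X e by simp
qed

lemma Itilde_sub_K:
  assumes "\<chi> = (\<lambda>_. 1) \<or> \<chi> = chi0"
  shows "Itilde n r t S \<subseteq> {p \<in> polyN n r. Phi mu \<chi> p = (0 :: _ \<Rightarrow>\<^sub>0 'k::field)}"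
proof -
  interpret cring "ringR n r :: 'k mpoly ring" by (rule cring_R)
  have mult: "\<And>p q. Phi mu \<chi> (p * q) = Phi mu \<chi> p * (Phi mu \<chi> q :: _ \<Rightarrow>\<^sub>0 'k)"
    using assms Phi1_mult Phi0_mult by auto
  show ?thesis unfolding Itilde_def
  proof (rule genideal_minimal[OF kernel_ideal[OF mult]])
    show "{fbin i a b |i a b. i \<in> {1..t} \<and> connected_in S a b} \<subseteq> {p \<in> polyN n r. Phi mu \<chi> p = 0}"
      using gens_carrier Phi_gen[OF _ _ assms] by blast
  qed
qed

end

context setting begin

lemma single0_polyN: "(Poly_Mapping.single 0 c :: 'k::field mpoly) \<in> polyN n r"
  by (simp add: polyN_def)

lemma single_polyN: "Poly_Mapping.keys m \<subseteq> G \<Longrightarrow> (Poly_Mapping.single m c :: 'k::field mpoly) \<in> polyN n r"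
  by (auto simp: polyN_def)

lemma kernel1:
  "p \<in> polyN n r \<Longrightarrow> Phi mu (\<lambda>_. 1) p = (0 :: _ \<Rightarrow>\<^sub>0 'k::field) \<Longrightarrow> p \<in> Itilde n r t S"
proof (induction "card (Poly_Mapping.keys p)" arbitrary: p rule: less_induct)
  case less
  let ?I = "Itilde n r t S :: 'k mpoly set"
  have I: "ideal ?I (ringR n r)" by (rule Itilde_ideal)
  show ?case
  proof (cases "p = 0")
    case True then show ?thesis using ideal_zero[OF I] by simp
  next
    case False
    then obtain m where m: "m \<in> Poly_Mapping.keys p" by (metis keys_eq_empty ex_in_conv)
    define c where "c = Poly_Mapping.lookup p m"
    have c0: "c \<noteq> 0" using m by (simp add: c_def in_keys_iff)
    have km: "Poly_Mapping.keys m \<subseteq> G" using m less.prems(1) by (auto simp: polyN_def)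
    have "\<exists>m'\<in>Poly_Mapping.keys p. m' \<noteq> m \<and> mu m' = mu m"
    proof (rule ccontr)
      assume no: "\<not> ?thesis"
      have "Poly_Mapping.lookup (Phi mu (\<lambda>_. 1) p) (mu m)
          = (\<Sum>m''\<in>Poly_Mapping.keys p. if mu m'' = mu m then Poly_Mapping.lookup p m'' else 0)"
        by (simp add: Phi_def lookup_sum lookup_single when_def)
      also have "\<dots> = (\<Sum>m''\<in>Poly_Mapping.keys p. if m'' = m then Poly_Mapping.lookup p m'' else 0)"
        using no by (intro sum.cong) auto
      also have "\<dots> = c" using m by (simp add: c_def)
      finally show False using less.prems(2) c0 by simp
    qed
    then obtain m' where m': "m' \<in> Poly_Mapping.keys p" "m' \<noteq> m" "mu m' = mu m" by blast
    have km': "Poly_Mapping.keys m' \<subseteq> G" using m' less.prems(1) by (auto simp: polyN_def)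
    define d where "d = Poly_Mapping.single m c - Poly_Mapping.single m' (c :: 'k)"
    have "d = Poly_Mapping.single 0 c * (X m - X m')"
      by (simp add: d_def X_def mult_single algebra_simps)
    then have dI: "d \<in> ?I" using ideal_lmult[OF I single0_polyN lemmaB[OF km km']] m'(3) by simp
    have dP: "d \<in> polyN n r" using ideal_carr[OF I dI] .
    have Phid: "Phi mu (\<lambda>_. 1) d = 0" using Itilde_sub_K[of "\<lambda>_. 1"] dI by auto
    define q where "q = p - d"
    have qP: "q \<in> polyN n r" unfolding q_def by (rule polyN_diff[OF less.prems(1) dP])
    have Phiq: "Phi mu (\<lambda>_. 1) q = 0" unfolding q_def Phi_diff Phid less.prems(2) by simp
    have "Poly_Mapping.keys q \<subseteq> Poly_Mapping.keys p - {m}"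
    proof
      fix k assume k: "k \<in> Poly_Mapping.keys q"
      have lq: "Poly_Mapping.lookup q k = Poly_Mapping.lookup p k - (c when m = k) + (c when m' = k)"
        by (simp add: q_def d_def lookup_minus lookup_single)
      show "k \<in> Poly_Mapping.keys p - {m}"
      proof (cases "k = m")
        case True
        then show ?thesis using k lq m'(2) by (simp add: in_keys_iff c_def)
      next
        case False
        then show ?thesis using k lq m'(1) by (cases "k = m'") (auto simp: in_keys_iff)
      qed
    qed
    then have "Poly_Mapping.keys q \<subset> Poly_Mapping.keys p" using m by blast
    then have "card (Poly_Mapping.keys q) < card (Poly_Mapping.keys p)"
      by (rule psubset_card_mono[OF finite_keys])
    then have "q \<in> ?I" using less.hyps qP Phiq by blast
    then have "q + d \<in> ?I" using ideal_add[OF I _ dI] by blast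
    then show ?thesis by (simp add: q_def)
  qed
qed

lemma one_notin:
  assumes "\<chi> 0 = 1" "J \<subseteq> {p \<in> polyN n r. Phi mu \<chi> p = (0 :: _ \<Rightarrow>\<^sub>0 'k::field)}"
  shows "(1 :: 'k mpoly) \<notin> J"
proof
  assume "(1 :: 'k mpoly) \<in> J"
  then have "Phi mu \<chi> (X 0 :: 'k mpoly) = 0" using assms(2) by (auto simp: X_def)
  then have "Poly_Mapping.single (mu 0) (1::'k) = 0" using assms(1) by (simp add: Phi_X)
  then have "Poly_Mapping.lookup (Poly_Mapping.single (mu 0) (1::'k)) (mu 0) = 0" by simp
  then show False by simp
qed

lemma Itilde_prime: "primeideal (Itilde n r t S :: 'k::field mpoly set) (ringR n r)"
proof (rule primeidealI)
  show "ideal (Itilde n r t S :: 'k mpoly set) (ringR n r)" by (rule Itilde_ideal)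
  show "cring (ringR n r :: 'k mpoly ring)" by (rule cring_R)
  have "(1 :: 'k mpoly) \<notin> Itilde n r t S" by (rule one_notin[of "\<lambda>_. 1"]) (simp, rule Itilde_sub_K, simp)
  then show "carrier (ringR n r :: 'k mpoly ring) \<noteq> Itilde n r t S" using polyN_one by (auto simp: R_simps)
  fix a b :: "'k mpoly"
  assume a: "a \<in> carrier (ringR n r)" and b: "b \<in> carrier (ringR n r)" and ab: "a \<otimes>\<^bsub>ringR n r\<^esub> b \<in> Itilde n r t S"
  have "Phi mu (\<lambda>_. 1) (a * b) = (0 :: _ \<Rightarrow>\<^sub>0 'k)" using ab Itilde_sub_K[of "\<lambda>_. 1"] by (auto simp: R_simps)
  then have "Phi mu (\<lambda>_. 1) a = (0 :: _ \<Rightarrow>\<^sub>0 'k) \<or> Phi mu (\<lambda>_. 1) b = (0 :: _ \<Rightarrow>\<^sub>0 'k)"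
    unfolding Phi1_mult by simp
  then show "a \<in> Itilde n r t S \<or> b \<in> Itilde n r t S" using kernel1 a b by (auto simp: R_simps)
qed

end

context setting begin

lemma vgens_carrier: "{var a | a. a \<in> G \<and> a \<notin> S} \<subseteq> (polyN n r :: 'k::field mpoly set)"
  by (auto intro: var_polyN)

lemma VarS_ideal: "ideal (VarS n r S :: 'k::field mpoly set) (ringR n r)"
proof -
  interpret cring "ringR n r :: 'k mpoly ring" by (rule cring_R)
  show ?thesis unfolding VarS_def by (rule genideal_ideal) (simp only: R_simps, rule vgens_carrier)
qed

lemma var_in_VarS: "a \<in> G \<Longrightarrow> a \<notin> S \<Longrightarrow> (var a :: 'k::field mpoly) \<in> VarS n r S"
proof -
  assume a: "a \<in> G" "a \<notin> S"
  interpret cring "ringR n r :: 'k mpoly ring" by (rule cring_R)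
  have "{var a | a. a \<in> G \<and> a \<notin> S} \<subseteq> (VarS n r S :: 'k mpoly set)"
    unfolding VarS_def by (rule genideal_self) (simp only: R_simps, rule vgens_carrier)
  then show ?thesis using a by blast
qed

lemma PS_ideal: "ideal (PS n r t S :: 'k::field mpoly set) (ringR n r)"
proof -
  interpret cring "ringR n r :: 'k mpoly ring" by (rule cring_R)
  show ?thesis unfolding PS_def by (rule add_ideals[OF VarS_ideal Itilde_ideal])
qed

lemma PS_mem: "x \<in> VarS n r S \<Longrightarrow> y \<in> Itilde n r t S \<Longrightarrow> (x + y :: 'k::field mpoly) \<in> PS n r t S"
  unfolding PS_def set_add_def' by (auto simp: R_simps)

lemma PS_memD: "z \<in> PS n r t S \<Longrightarrow> \<exists>x\<in>VarS n r S. \<exists>y\<in>Itilde n r t S. (z :: 'k::field mpoly) = x + y"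
  unfolding PS_def set_add_def' by (auto simp: R_simps)

lemma chi0_zero: "a \<in> G \<Longrightarrow> a \<notin> S \<Longrightarrow> Poly_Mapping.lookup m a \<noteq> 0 \<Longrightarrow> (chi0 m :: 'k::field) = 0"
  unfolding chi0_def by auto

lemma VarS_sub_K: "VarS n r S \<subseteq> {p \<in> polyN n r. Phi mu chi0 p = (0 :: _ \<Rightarrow>\<^sub>0 'k::field)}"
proof -
  interpret cring "ringR n r :: 'k mpoly ring" by (rule cring_R)
  show ?thesis unfolding VarS_def
  proof (rule genideal_minimal[OF kernel_ideal[OF Phi0_mult]])
    show "{var a | a. a \<in> G \<and> a \<notin> S} \<subseteq> {p \<in> polyN n r. Phi mu chi0 p = (0 :: _ \<Rightarrow>\<^sub>0 'k)}"
    proof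
      fix f :: "'k mpoly" assume "f \<in> {var a | a. a \<in> G \<and> a \<notin> S}"
      then obtain a where a: "f = var a" "a \<in> G" "a \<notin> S" by auto
      have "(chi0 (Poly_Mapping.single a 1) :: 'k) = 0" using a by (intro chi0_zero[of a]) simp_all
      then have "Phi mu chi0 f = (0 :: _ \<Rightarrow>\<^sub>0 'k)" unfolding a var_X Phi_X by simp
      then show "f \<in> {p \<in> polyN n r. Phi mu chi0 p = 0}" using a var_polyN by auto
    qed
  qed
qed

lemma PS_sub_K: "PS n r t S \<subseteq> {p \<in> polyN n r. Phi mu chi0 p = (0 :: _ \<Rightarrow>\<^sub>0 'k::field)}"
proof
  fix z :: "'k mpoly" assume "z \<in> PS n r t S"
  then obtain x y where xy: "x \<in> VarS n r S" "y \<in> Itilde n r t S" "z = x + y" using PS_memD by blast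
  have x: "x \<in> polyN n r" "Phi mu chi0 x = (0 :: _ \<Rightarrow>\<^sub>0 'k)" using VarS_sub_K xy(1) by auto
  have y: "y \<in> polyN n r" "Phi mu chi0 y = (0 :: _ \<Rightarrow>\<^sub>0 'k)" using Itilde_sub_K[of chi0] xy(2) by auto
  show "z \<in> {p \<in> polyN n r. Phi mu chi0 p = 0}" using x y xy(3) by (simp add: polyN_add Phi_add)
qed

lemma chi0_cases: "(chi0 m :: 'k::field) = 0 \<or> chi0 m = 1" by (simp add: chi0_def)

lemma kernel0:
  assumes p: "p \<in> polyN n r" and z: "Phi mu chi0 p = (0 :: _ \<Rightarrow>\<^sub>0 'k::field)"
  shows "p \<in> PS n r t S"
proof -
  let ?K = "Poly_Mapping.keys p"
  let ?V = "VarS n r S :: 'k mpoly set"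
  define f1 where "f1 m = (if (chi0 m :: 'k) = 0 then Poly_Mapping.single m (Poly_Mapping.lookup p m) else 0)" for m
  define f2 where "f2 m = (if (chi0 m :: 'k) = 0 then 0 else Poly_Mapping.single m (Poly_Mapping.lookup p m))" for m
  define p1 where "p1 = sum f1 ?K"
  define p2 where "p2 = sum f2 ?K"
  have "p = (\<Sum>m\<in>?K. Poly_Mapping.single m (Poly_Mapping.lookup p m))" by (rule poly_sum_singles)
  also have "\<dots> = (\<Sum>m\<in>?K. f1 m + f2 m)" by (rule sum.cong) (simp_all add: f1_def f2_def)
  also have "\<dots> = p1 + p2" by (simp add: p1_def p2_def sum.distrib)
  finally have peq: "p = p1 + p2" .
  have kG: "Poly_Mapping.keys m \<subseteq> G" if "m \<in> ?K" for m using p that by (auto simp: polyN_def)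
  have f1V: "f1 m \<in> ?V" if m: "m \<in> ?K" for m
  proof (cases "(chi0 m :: 'k) = 0")
    case True
    have "\<not> (\<forall>a\<in>G - S. Poly_Mapping.lookup m a = 0)"
    proof
      assume "\<forall>a\<in>G - S. Poly_Mapping.lookup m a = 0"
      then have "(chi0 m :: 'k) = 1" unfolding chi0_def by (rule if_P)
      then show False using True by simp
    qed
    then obtain a where a: "a \<in> G" "a \<notin> S" "Poly_Mapping.lookup m a \<noteq> 0" by blast
    have meq: "(m - Poly_Mapping.single a 1) + Poly_Mapping.single a 1 = m"
      using a(3) by (intro single_split[symmetric]) simp
    have eq: "Poly_Mapping.single (m - Poly_Mapping.single a 1) (Poly_Mapping.lookup p m) * (var a :: 'k mpoly) = Poly_Mapping.single m (Poly_Mapping.lookup p m)"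
      unfolding var_def mult_single mult_1_right meq ..
    have "Poly_Mapping.keys (m - Poly_Mapping.single a 1) \<subseteq> G"
      by (rule order.trans[OF keys_minus_nat kG[OF m]])
    then have "Poly_Mapping.single (m - Poly_Mapping.single a 1) (Poly_Mapping.lookup p m) \<in> polyN n r"
      by (rule single_polyN)
    from ideal_lmult[OF VarS_ideal this var_in_VarS[OF a(1,2)]]
    have "Poly_Mapping.single m (Poly_Mapping.lookup p m) \<in> ?V" unfolding eq .
    then show ?thesis unfolding f1_def by (simp only: True simp_thms(6) if_True)
  next
    case False
    then show ?thesis using ideal_zero[OF VarS_ideal] unfolding f1_def by (simp only: if_False)
  qed
  have p1V: "p1 \<in> ?V" unfolding p1_def by (rule ideal_sum[OF VarS_ideal f1V])
  have f2P: "f2 m \<in> polyN n r" if "m \<in> ?K" for m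
  proof -
    have "(0::'k mpoly) \<in> polyN n r" by (rule polyN_zero)
    moreover have "(Poly_Mapping.single m (Poly_Mapping.lookup p m) :: 'k mpoly) \<in> polyN n r"
      by (rule single_polyN[OF kG[OF that]])
    ultimately show ?thesis unfolding f2_def by simp
  qed
  have p2P: "p2 \<in> polyN n r" unfolding p2_def by (rule polyN_sum) (rule f2P)
  have "Phi mu chi0 p1 = (0 :: _ \<Rightarrow>\<^sub>0 'k)" unfolding p1_def Phi_sum
    by (intro sum.neutral) (simp add: f1_def Phi_single)
  then have "Phi mu chi0 p2 = (0 :: _ \<Rightarrow>\<^sub>0 'k)" using z unfolding peq Phi_add by simp
  moreover have "Phi mu chi0 p2 = (Phi mu (\<lambda>_. 1) p2 :: _ \<Rightarrow>\<^sub>0 'k)" unfolding p2_def Phi_sum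
  proof (rule sum.cong)
    fix m show "Phi mu chi0 (f2 m) = (Phi mu (\<lambda>_. 1) (f2 m) :: _ \<Rightarrow>\<^sub>0 'k)"
    proof (cases "(chi0 m :: 'k) = 0")
      case True then show ?thesis by (simp add: f2_def)
    next
      case False
      then have c1: "(chi0 m :: 'k) = 1" using chi0_cases[where 'k='k, of m] by blast
      have "f2 m = Poly_Mapping.single m (Poly_Mapping.lookup p m)" using False by (simp add: f2_def)
      then show ?thesis by (simp add: Phi_single c1)
    qed
  qed simp
  ultimately have "p2 \<in> Itilde n r t S" using kernel1[OF p2P] by simp
  then show ?thesis using PS_mem[OF p1V] peq by simp
qed

lemma PS_prime: "primeideal (PS n r t S :: 'k::field mpoly set) (ringR n r)"
proof (rule primeidealI)
  show "ideal (PS n r t S :: 'k mpoly set) (ringR n r)" by (rule PS_ideal)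
  show "cring (ringR n r :: 'k mpoly ring)" by (rule cring_R)
  have "(1 :: 'k mpoly) \<notin> PS n r t S" by (rule one_notin[of chi0]) (simp add: chi0_def, rule PS_sub_K)
  then show "carrier (ringR n r :: 'k mpoly ring) \<noteq> PS n r t S" using polyN_one by (auto simp: R_simps)
  fix a b :: "'k mpoly"
  assume a: "a \<in> carrier (ringR n r)" and b: "b \<in> carrier (ringR n r)" and ab: "a \<otimes>\<^bsub>ringR n r\<^esub> b \<in> PS n r t S"
  have "Phi mu chi0 (a * b) = (0 :: _ \<Rightarrow>\<^sub>0 'k)" using ab PS_sub_K by (auto simp: R_simps)
  then have "Phi mu chi0 a = (0 :: _ \<Rightarrow>\<^sub>0 'k) \<or> Phi mu chi0 b = (0 :: _ \<Rightarrow>\<^sub>0 'k)"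
    unfolding Phi0_mult by simp
  then show "a \<in> PS n r t S \<or> b \<in> PS n r t S" using kernel0 a b by (auto simp: R_simps)
qed

end

theorem theorem4p5:
  fixes n t :: nat and r :: "nat \<Rightarrow> nat" and S :: "(nat \<Rightarrow> nat) set"
  assumes "n \<ge> 1" and "\<forall>i\<in>{1..n}. r i \<ge> 1"
    and "t \<in> {1..n}"
    and "S \<subseteq> gridN n r" and "switchable t S"
  shows "primeideal (Itilde n r t S :: ('k::field) mpoly set) (ringR n r) \<and>
         primeideal (PS n r t S :: ('k::field) mpoly set) (ringR n r)"
proof -
  interpret setting n t r S using assms(3,4,5) by unfold_locales
  show ?thesis using Itilde_prime PS_prime by blast
qed

end
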